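(* Let $F\subseteq\{1,\dots,d\}$ and $\beta=\hat\beta(F)$. Let $\beta'\in\mathbb{R}^d$ have support $F'$, and let $s$ be a positive integer with $|F\cup F'|\le s$. Let $i$ be an index with $|\nabla Q(\beta)_i|=\|\nabla Q(\beta)\|_\infty$. Then $$|F'-F|\big(Q(\beta)-\min_\eta Q(\beta+\eta e_i)\big)\ge\frac{\rho_-(s)}{\rho_+(1)}\big(Q(\beta)-Q(\beta')\big).$$
   Context: Let $Q:\mathbb{R}^d\to\mathbb{R}$ be convex and continuously differentiable. $e_j$ is the $j$-th standard basis vector, $\mathrm{supp}(\beta)=\{j:\beta_j\ne0\}$, $\|\beta\|_0=|\mathrm{supp}(\beta)|$, $A-B$ is set difference. For $F\subseteq\{1,\dots,d\}$, $\hat\beta(F)$ denotes a minimizer of $Q$ over $\{\beta:\mathrm{supp}(\beta)\subseteq F\}$ (assumed to exist). For a positive integer $s$, the restricted strong convexity constants $\rho_-(s),\rho_+(s)>0$ are constants such that for all $\beta,\beta'\in\mathbb{R}^d$ with $\|\beta'-\beta\|_0\le s$: $\frac{\rho_-(s)}{2}\|\beta'-\beta\|^2\le Q(\beta')-Q(\beta)-\langle\nabla Q(\beta),\beta'-\beta\rangle\le\frac{\rho_+(s)}{2}\|\beta'-\beta\|^2.$ *)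

theory Defs
  imports "HOL-Analysis.Analysis"
begin

text \<open>Support of a vector in R^d (index type 'n with CARD('n) = d).\<close>
definition supp :: "real ^ 'n \<Rightarrow> 'n set" where
  "supp \<beta> = {j. \<beta> $ j \<noteq> 0}"

definition cont_diff_grad :: "(real ^ 'n \<Rightarrow> real) \<Rightarrow> (real ^ 'n \<Rightarrow> real ^ 'n) \<Rightarrow> bool" where
  "cont_diff_grad Q G \<longleftrightarrow>
     (\<forall>\<beta>. (Q has_derivative (\<lambda>h. G \<beta> \<bullet> h)) (at \<beta>)) \<and> continuous_on UNIV G"

text \<open>beta is a minimizer of Q over vectors supported in F (i.e. beta = hat-beta(F)).\<close>
definition restricted_minimizer :: "(real ^ 'n \<Rightarrow> real) \<Rightarrow> 'n set \<Rightarrow> real ^ 'n \<Rightarrow> bool" where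
  "restricted_minimizer Q F \<beta> \<longleftrightarrow>
     supp \<beta> \<subseteq> F \<and> (\<forall>\<gamma>. supp \<gamma> \<subseteq> F \<longrightarrow> Q \<beta> \<le> Q \<gamma>)"

text \<open>Restricted strong convexity / smoothness at sparsity level s with constants rm = rho_-(s), rp = rho_+(s).\<close>
definition rsc :: "(real ^ 'n \<Rightarrow> real) \<Rightarrow> (real ^ 'n \<Rightarrow> real ^ 'n) \<Rightarrow> nat \<Rightarrow> real \<Rightarrow> real \<Rightarrow> bool" where
  "rsc Q G s rm rp \<longleftrightarrow> rm > 0 \<and> rp > 0 \<and>
     (\<forall>\<beta> \<beta>'. card (supp (\<beta>' - \<beta>)) \<le> s \<longrightarrow>
        rm / 2 * (norm (\<beta>' - \<beta>))\<^sup>2 \<le> Q \<beta>' - Q \<beta> - G \<beta> \<bullet> (\<beta>' - \<beta>) \<and>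
        Q \<beta>' - Q \<beta> - G \<beta> \<bullet> (\<beta>' - \<beta>) \<le> rp / 2 * (norm (\<beta>' - \<beta>))\<^sup>2)"

end

theory Submission
  imports Defs
begin
lemma supp_axis_card: "card (supp (t *\<^sub>R axis j (1::real) :: real^'n)) \<le> 1"
proof -
  have "supp (t *\<^sub>R axis j (1::real) :: real^'n) \<subseteq> {j}"
    by (auto simp: supp_def axis_def)
  then have "card (supp (t *\<^sub>R axis j (1::real) :: real^'n)) \<le> card {j}"
    by (rule card_mono[rotated]) simp
  then show ?thesis by simp
qed

lemma axis_step:
  assumes "rsc Q G 1 rm rp"
  shows "rm/2 * t^2 \<le> Q (b + t *\<^sub>R axis j 1) - Q b - t * G b $ j"
    and "Q (b + t *\<^sub>R axis j 1) - Q b - t * G b $ j \<le> rp/2 * t^2"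
proof -
  have c: "card (supp ((b + t *\<^sub>R axis j 1) - b)) \<le> 1" using supp_axis_card by simp
  have n: "(norm ((b + t *\<^sub>R axis j 1) - b))\<^sup>2 = t^2" by (simp add: power2_abs)
  have i: "G b \<bullet> ((b + t *\<^sub>R axis j 1) - b) = t * G b $ j"
    by (simp add: inner_axis)
  have "rm / 2 * (norm ((b + t *\<^sub>R axis j 1) - b))\<^sup>2 \<le> Q (b + t *\<^sub>R axis j 1) - Q b - G b \<bullet> ((b + t *\<^sub>R axis j 1) - b) \<and>
        Q (b + t *\<^sub>R axis j 1) - Q b - G b \<bullet> ((b + t *\<^sub>R axis j 1) - b) \<le> rp / 2 * (norm ((b + t *\<^sub>R axis j 1) - b))\<^sup>2"
    using assms c unfolding rsc_def by blast
  then show "rm/2 * t^2 \<le> Q (b + t *\<^sub>R axis j 1) - Q b - t * G b $ j"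
      "Q (b + t *\<^sub>R axis j 1) - Q b - t * G b $ j \<le> rp/2 * t^2"
    unfolding n i by auto
qed

theorem mainTheorem14:
  fixes Q :: "real ^ 'n \<Rightarrow> real" and G :: "real ^ 'n \<Rightarrow> real ^ 'n"
    and rho_minus rho_plus :: "nat \<Rightarrow> real"
    and F :: "'n set" and \<beta> \<beta>' :: "real ^ 'n" and s :: nat and i :: 'n
  assumes convex: "convex_on UNIV Q"
    and diff: "cont_diff_grad Q G"
    and rsc_s: "rsc Q G s (rho_minus s) (rho_plus s)"
    and rsc_1: "rsc Q G 1 (rho_minus 1) (rho_plus 1)"
    and min: "restricted_minimizer Q F \<beta>"
    and s_pos: "s > 0"
    and card_le: "card (F \<union> supp \<beta>') \<le> s"
    and i_max: "\<bar>G \<beta> $ i\<bar> = infnorm (G \<beta>)"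
  shows "real (card (supp \<beta>' - F)) * (Q \<beta> - (INF \<eta>. Q (\<beta> + \<eta> *\<^sub>R axis i 1)))
           \<ge> rho_minus s / rho_plus 1 * (Q \<beta> - Q \<beta>')"
proof -
  define g where "g = G \<beta>"
  define rs where "rs = rho_minus s"
  define r1 where "r1 = rho_plus 1"
  define rm1 where "rm1 = rho_minus 1"
  define m where "m = infnorm g"
  define K where "K = supp \<beta>' - F"
  define k where "k = card K"
  define \<Delta> where "\<Delta> = \<beta>' - \<beta>"
  have rs_pos: "rs > 0" using rsc_s by (simp add: rsc_def rs_def)
  have r1_pos: "r1 > 0" using rsc_1 by (simp add: rsc_def r1_def)
  have rm1_pos: "rm1 > 0" using rsc_1 by (simp add: rsc_def rm1_def)
  have suppb: "supp \<beta> \<subseteq> F" and minF: "\<And>\<gamma>. supp \<gamma> \<subseteq> F \<Longrightarrow> Q \<beta> \<le> Q \<gamma>"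
    using min by (auto simp: restricted_minimizer_def)
  have g0: "g $ j = 0" if jF: "j \<in> F" for j
  proof -
    define t where "t = - g $ j / r1"
    have "supp (\<beta> + t *\<^sub>R axis j 1) \<subseteq> F"
      using suppb jF by (auto simp: supp_def axis_def)
    then have "Q \<beta> \<le> Q (\<beta> + t *\<^sub>R axis j 1)" by (rule minF)
    moreover have "Q (\<beta> + t *\<^sub>R axis j 1) - Q \<beta> - t * g $ j \<le> r1/2 * t^2"
      using axis_step(2)[OF rsc_1] unfolding g_def r1_def by blast
    ultimately have "0 \<le> t * g $ j + r1/2 * t^2" by linarith
    also have "\<dots> = - ((g $ j)^2) / (2*r1)"
      using r1_pos by (simp add: t_def field_simps power2_eq_square)
    finally have "(g $ j)^2 / (2*r1) \<le> 0" by simp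
    then have "(g $ j)^2 \<le> 0" using r1_pos by (auto simp: divide_le_0_iff)
    then show ?thesis by simp
  qed
  have bdd: "bdd_below (range (\<lambda>\<eta>. Q (\<beta> + \<eta> *\<^sub>R axis i 1)))"
  proof
    fix y assume "y \<in> range (\<lambda>\<eta>. Q (\<beta> + \<eta> *\<^sub>R axis i 1))"
    then obtain \<eta> where y: "y = Q (\<beta> + \<eta> *\<^sub>R axis i 1)" by auto
    have a: "rm1/2 * \<eta>^2 \<le> y - Q \<beta> - \<eta> * g $ i"
      using axis_step(1)[OF rsc_1] unfolding y g_def rm1_def by blast
    have "rm1/2 * \<eta>^2 + \<eta> * g $ i \<ge> - ((g $ i)^2) / (2*rm1)"
    proof -
      have "0 \<le> (rm1 * \<eta> + g $ i)^2 / (2*rm1)" using rm1_pos by simp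
      also have "\<dots> = rm1/2 * \<eta>^2 + \<eta> * g $ i + (g $ i)^2 / (2*rm1)"
        using rm1_pos by (simp add: field_simps power2_eq_square)
      finally show ?thesis by linarith
    qed
    with a show "Q \<beta> - ((g $ i)^2) / (2*rm1) \<le> y" by linarith
  qed
  have INFb: "(INF \<eta>. Q (\<beta> + \<eta> *\<^sub>R axis i 1)) \<le> Q \<beta> - m^2 / (2*r1)"
  proof -
    define t where "t = - g $ i / r1"
    have "(INF \<eta>. Q (\<beta> + \<eta> *\<^sub>R axis i 1)) \<le> Q (\<beta> + t *\<^sub>R axis i 1)"
      by (rule cINF_lower[OF bdd]) simp
    moreover have "Q (\<beta> + t *\<^sub>R axis i 1) - Q \<beta> - t * g $ i \<le> r1/2 * t^2"
      using axis_step(2)[OF rsc_1] unfolding g_def r1_def by blast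
    moreover have "t * g $ i + r1/2 * t^2 = - ((g $ i)^2 / (2*r1))"
      using r1_pos by (simp add: t_def field_simps power2_eq_square)
    moreover have "(g $ i)^2 = m^2" using i_max unfolding m_def g_def
      by (metis power2_abs)
    moreover have "- ((g $ i)^2 / (2*r1)) = - (m^2 / (2*r1))" using calculation(4) by simp
    ultimately show ?thesis by linarith
  qed
  have cardD: "card (supp (\<beta>' - \<beta>)) \<le> s"
  proof -
    have "supp (\<beta>' - \<beta>) \<subseteq> F \<union> supp \<beta>'" using suppb by (auto simp: supp_def)
    then have "card (supp (\<beta>' - \<beta>)) \<le> card (F \<union> supp \<beta>')" by (rule card_mono[rotated]) simp
    with card_le show ?thesis by linarith
  qed
  have lowQ: "rs/2 * (norm \<Delta>)^2 \<le> Q \<beta>' - Q \<beta> - g \<bullet> \<Delta>"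
    using rsc_s cardD unfolding rsc_def rs_def g_def \<Delta>_def by blast
  have gD: "g \<bullet> \<Delta> = (\<Sum>j\<in>K. g $ j * \<Delta> $ j)"
  proof -
    have "g \<bullet> \<Delta> = (\<Sum>j\<in>UNIV. g $ j * \<Delta> $ j)" by (simp add: inner_vec_def)
    also have "\<dots> = (\<Sum>j\<in>K. g $ j * \<Delta> $ j)"
    proof (rule sum.mono_neutral_right)
      show "\<forall>j\<in>UNIV - K. g $ j * \<Delta> $ j = 0"
      proof
        fix j assume "j \<in> UNIV - K"
        then have "j \<in> F \<or> (j \<notin> F \<and> \<beta>' $ j = 0)" by (auto simp: K_def supp_def)
        moreover have "j \<notin> F \<Longrightarrow> \<beta> $ j = 0" using suppb by (auto simp: supp_def)
        ultimately show "g $ j * \<Delta> $ j = 0" using g0 by (auto simp: \<Delta>_def)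
      qed
    qed auto
    finally show ?thesis .
  qed
  have nD: "(\<Sum>j\<in>K. (\<Delta> $ j)^2) \<le> (norm \<Delta>)^2"
  proof -
    have "(norm \<Delta>)^2 = \<Delta> \<bullet> \<Delta>" by (rule power2_norm_eq_inner)
    also have "\<dots> = (\<Sum>j\<in>UNIV. (\<Delta> $ j)^2)" by (simp add: inner_vec_def power2_eq_square)
    finally have "(norm \<Delta>)^2 = (\<Sum>j\<in>UNIV. (\<Delta> $ j)^2)" .
    moreover have "(\<Sum>j\<in>K. (\<Delta> $ j)^2) \<le> (\<Sum>j\<in>UNIV. (\<Delta> $ j)^2)"
      by (rule sum_mono2) auto
    ultimately show ?thesis by simp
  qed
  have term_b: "- (g $ j * \<Delta> $ j) - rs/2 * (\<Delta> $ j)^2 \<le> m^2 / (2*rs)" for j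
  proof -
    have gm: "\<bar>g $ j\<bar> \<le> m" unfolding m_def by (rule component_le_infnorm_cart)
    have "- (g $ j * \<Delta> $ j) \<le> m * \<bar>\<Delta> $ j\<bar>"
      using gm by (metis abs_ge_minus_self abs_ge_zero abs_mult mult_right_mono order_trans)
    moreover have "m * \<bar>\<Delta> $ j\<bar> - rs/2 * (\<Delta> $ j)^2 \<le> m^2 / (2*rs)"
    proof -
      have "0 \<le> (rs * \<bar>\<Delta> $ j\<bar> - m)^2 / (2*rs)" using rs_pos by simp
      also have "\<dots> = m^2/(2*rs) - (m * \<bar>\<Delta> $ j\<bar> - rs/2 * (\<Delta> $ j)^2)"
        using rs_pos by (simp add: field_simps power2_eq_square)
      finally show ?thesis by linarith
    qed
    ultimately show ?thesis by linarith
  qed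
  have drop: "Q \<beta> - Q \<beta>' \<le> k * m^2 / (2*rs)"
  proof -
    have "Q \<beta> - Q \<beta>' \<le> - (g \<bullet> \<Delta>) - rs/2 * (norm \<Delta>)^2" using lowQ by linarith
    also have "\<dots> \<le> - (g \<bullet> \<Delta>) - rs/2 * (\<Sum>j\<in>K. (\<Delta> $ j)^2)"
      using nD rs_pos by simp
    also have "\<dots> = (\<Sum>j\<in>K. - (g $ j * \<Delta> $ j) - rs/2 * (\<Delta> $ j)^2)"
      by (simp add: gD sum_subtractf sum_distrib_left sum_negf)
    also have "\<dots> \<le> (\<Sum>j\<in>K. m^2 / (2*rs))" by (rule sum_mono) (rule term_b)
    also have "\<dots> = k * m^2 / (2*rs)" by (simp add: k_def)
    finally show ?thesis .
  qed
  have "rs / r1 * (Q \<beta> - Q \<beta>') \<le> rs / r1 * (k * m^2 / (2*rs))"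
    using drop rs_pos r1_pos by (intro mult_left_mono) auto
  also have "\<dots> = k * (m^2 / (2*r1))" using rs_pos r1_pos by (simp add: field_simps)
  also have "\<dots> \<le> k * (Q \<beta> - (INF \<eta>. Q (\<beta> + \<eta> *\<^sub>R axis i 1)))"
    using INFb by (intro mult_left_mono) auto
  finally show ?thesis unfolding rs_def r1_def k_def K_def .
qed

end
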